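(* For every formula with placeholders $\varphi$ and all formulas $\psi_1,\psi_2$: $\mathbf{GF}\,\varphi[\psi_1\mathbf{W}\psi_2] \equiv \mathbf{GF}\,\varphi[\psi_1\mathbf{U}\psi_2] \vee (\mathbf{FG}\psi_1 \wedge \mathbf{GF}\,\varphi[\mathbf{true}])$ and $\mathbf{FG}\,\varphi[\psi_1\mathbf{U}\psi_2] \equiv (\mathbf{GF}\psi_2 \wedge \mathbf{FG}\,\varphi[\psi_1\mathbf{W}\psi_2]) \vee \mathbf{FG}\,\varphi[\mathbf{false}]$.
   Context: Fix a finite set $Ap$ of atomic propositions. A word is an infinite sequence $w = w[0]w[1]\dots$ of letters of $2^{Ap}$, and $w_i$ denotes the suffix $w[i]w[i+1]\dots$. Formulas are generated by $\varphi ::= \mathbf{true} \mid \mathbf{false} \mid a \mid \neg a \mid \varphi\wedge\varphi \mid \varphi\vee\varphi \mid \mathbf{X}\varphi \mid \varphi\,\mathbf{U}\,\varphi \mid \varphi\,\mathbf{W}\,\varphi \mid \mathbf{GF}\varphi \mid \mathbf{FG}\varphi$ ($a\in Ap$), where $\mathbf{GF}$, $\mathbf{FG}$ are single unary operators. Semantics: $w\models a$ iff $a\in w[0]$, $w\models\neg a$ iff $a\notin w[0]$, Boolean constants and connectives as usual; $w\models\mathbf{X}\varphi$ iff $w_1\models\varphi$; $w\models\varphi\mathbf{U}\psi$ iff $\exists k$: $w_k\models\psi$ and $\forall j<k$: $w_j\models\varphi$; $w\models\varphi\mathbf{W}\psi$ iff ($\forall k$: $w_k\models\varphi$) or $w\models\varphi\mathbf{U}\psi$;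 $w\models\mathbf{GF}\varphi$ iff $w_k\models\varphi$ for infinitely many $k$; $w\models\mathbf{FG}\varphi$ iff $\exists n\,\forall k\geq n$: $w_k\models\varphi$. $\varphi\equiv\psi$ means both formulas are satisfied by exactly the same words. A formula with placeholders is a formula over $Ap\cup\{\star\}$, where $\star$ is a special fresh atomic proposition, with at least one occurrence of $\star$ and no occurrence of $\neg\star$; for such $\varphi$ and a formula $\psi$, $\varphi[\psi]$ denotes the result of substituting $\psi$ for every occurrence of $\star$; substitution binds more strongly than any operator, so $\mathbf{GF}\,\varphi[\psi]$ means $\mathbf{GF}(\varphi[\psi])$. *)

theory Defs
  imports Main
begin

datatype 'a ltl =
    LTrue
  | LFalse
  | Prop 'a
  | NProp 'a
  | And "'a ltl" "'a ltl"
  | Or "'a ltl" "'a ltl"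
  | Next "'a ltl"
  | Until "'a ltl" "'a ltl"
  | WUntil "'a ltl" "'a ltl"
  | GF "'a ltl"
  | FG "'a ltl"

type_synonym 'a word = "nat \<Rightarrow> 'a set"

definition suffix :: "nat \<Rightarrow> 'a word \<Rightarrow> 'a word" where
  "suffix i w = (\<lambda>j. w (i + j))"

fun models :: "'a word \<Rightarrow> 'a ltl \<Rightarrow> bool" (infix "\<Turnstile>" 50) where
  "w \<Turnstile> LTrue = True"
| "w \<Turnstile> LFalse = False"
| "w \<Turnstile> Prop a = (a \<in> w 0)"
| "w \<Turnstile> NProp a = (a \<notin> w 0)"
| "w \<Turnstile> And \<phi> \<psi> = (w \<Turnstile> \<phi> \<and> w \<Turnstile> \<psi>)"
| "w \<Turnstile> Or \<phi> \<psi> = (w \<Turnstile> \<phi> \<or> w \<Turnstile> \<psi>)"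
| "w \<Turnstile> Next \<phi> = (suffix 1 w \<Turnstile> \<phi>)"
| "w \<Turnstile> Until \<phi> \<psi> = (\<exists>k. suffix k w \<Turnstile> \<psi> \<and> (\<forall>j<k. suffix j w \<Turnstile> \<phi>))"
| "w \<Turnstile> WUntil \<phi> \<psi> = ((\<forall>k. suffix k w \<Turnstile> \<phi>) \<or>
                          (\<exists>k. suffix k w \<Turnstile> \<psi> \<and> (\<forall>j<k. suffix j w \<Turnstile> \<phi>)))"
| "w \<Turnstile> GF \<phi> = (\<exists>\<^sub>\<infinity>k. suffix k w \<Turnstile> \<phi>)"
| "w \<Turnstile> FG \<phi> = (\<exists>n. \<forall>k\<ge>n. suffix k w \<Turnstile> \<phi>)"

definition ltl_equiv :: "'a ltl \<Rightarrow> 'a ltl \<Rightarrow> bool" (infix "\<equiv>\<^sub>L" 45) where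
  "\<phi> \<equiv>\<^sub>L \<psi> \<longleftrightarrow> (\<forall>w. w \<Turnstile> \<phi> \<longleftrightarrow> w \<Turnstile> \<psi>)"

text \<open>Formulas with placeholders: formulas over Ap \<union> {\<star>}, encoded as 'a option with
  None playing the role of the fresh proposition \<star>.\<close>
fun props :: "'a ltl \<Rightarrow> 'a set" where
  "props LTrue = {}"
| "props LFalse = {}"
| "props (Prop a) = {a}"
| "props (NProp a) = {}"
| "props (And \<phi> \<psi>) = props \<phi> \<union> props \<psi>"
| "props (Or \<phi> \<psi>) = props \<phi> \<union> props \<psi>"
| "props (Next \<phi>) = props \<phi>"
| "props (Until \<phi> \<psi>) = props \<phi> \<union> props \<psi>"
| "props (WUntil \<phi> \<psi>) = props \<phi> \<union> props \<psi>"
| "props (GF \<phi>) = props \<phi>"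
| "props (FG \<phi>) = props \<phi>"

fun nprops :: "'a ltl \<Rightarrow> 'a set" where
  "nprops LTrue = {}"
| "nprops LFalse = {}"
| "nprops (Prop a) = {}"
| "nprops (NProp a) = {a}"
| "nprops (And \<phi> \<psi>) = nprops \<phi> \<union> nprops \<psi>"
| "nprops (Or \<phi> \<psi>) = nprops \<phi> \<union> nprops \<psi>"
| "nprops (Next \<phi>) = nprops \<phi>"
| "nprops (Until \<phi> \<psi>) = nprops \<phi> \<union> nprops \<psi>"
| "nprops (WUntil \<phi> \<psi>) = nprops \<phi> \<union> nprops \<psi>"
| "nprops (GF \<phi>) = nprops \<phi>"
| "nprops (FG \<phi>) = nprops \<phi>"

definition placeholder_formula :: "'a option ltl \<Rightarrow> bool" where
  "placeholder_formula \<phi> \<longleftrightarrow> None \<in> props \<phi> \<and> None \<notin> nprops \<phi>"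

text \<open>Substitution \<phi>[\<psi>]: replace every occurrence of \<star> by \<psi>.  (The case of a negated
  \<star> never arises for placeholder formulas; it is mapped to false arbitrarily.)\<close>
fun subst :: "'a option ltl \<Rightarrow> 'a ltl \<Rightarrow> 'a ltl" where
  "subst LTrue \<psi> = LTrue"
| "subst LFalse \<psi> = LFalse"
| "subst (Prop None) \<psi> = \<psi>"
| "subst (Prop (Some a)) \<psi> = Prop a"
| "subst (NProp None) \<psi> = LFalse"
| "subst (NProp (Some a)) \<psi> = NProp a"
| "subst (And \<phi>1 \<phi>2) \<psi> = And (subst \<phi>1 \<psi>) (subst \<phi>2 \<psi>)"
| "subst (Or \<phi>1 \<phi>2) \<psi> = Or (subst \<phi>1 \<psi>) (subst \<phi>2 \<psi>)"
| "subst (Next \<phi>) \<psi> = Next (subst \<phi> \<psi>)"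
| "subst (Until \<phi>1 \<phi>2) \<psi> = Until (subst \<phi>1 \<psi>) (subst \<phi>2 \<psi>)"
| "subst (WUntil \<phi>1 \<phi>2) \<psi> = WUntil (subst \<phi>1 \<psi>) (subst \<phi>2 \<psi>)"
| "subst (GF \<phi>) \<psi> = GF (subst \<phi> \<psi>)"
| "subst (FG \<phi>) \<psi> = FG (subst \<phi> \<psi>)"

end

theory Submission
  imports Defs "HOL-Library.Infinite_Set"
begin

lemma suffix_suffix[simp]: "suffix i (suffix j w) = suffix (j + i) w"
  by (simp add: suffix_def add.assoc)

lemma suffix_0[simp]: "suffix 0 w = w"
  by (simp add: suffix_def)

lemma subst_mono:
  "(\<forall>i. suffix i w \<Turnstile> a \<longrightarrow> suffix i w \<Turnstile> b) \<Longrightarrow> w \<Turnstile> subst \<phi> a \<Longrightarrow> w \<Turnstile> subst \<phi> b"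
proof (induction \<phi> arbitrary: w)
  case (Prop x)
  then show ?case by (cases x) (simp_all, metis suffix_0)
next
  case (NProp x)
  then show ?case by (cases x) simp_all
next
  case (And \<phi>1 \<phi>2)
  then show ?case by simp
next
  case (Or \<phi>1 \<phi>2)
  then show ?case by (simp only: subst.simps models.simps) blast
next
  case (Next \<phi>)
  then show ?case by simp
next
  case (Until \<phi>1 \<phi>2)
  have h1: "\<And>k. suffix k w \<Turnstile> subst \<phi>1 a \<Longrightarrow> suffix k w \<Turnstile> subst \<phi>1 b"
    using Until.IH(1)[of "suffix k w" for k] Until.prems(1) by simp
  have h2: "\<And>k. suffix k w \<Turnstile> subst \<phi>2 a \<Longrightarrow> suffix k w \<Turnstile> subst \<phi>2 b"
    using Until.IH(2)[of "suffix k w" for k] Until.prems(1) by simp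
  from Until.prems(2) obtain k where "suffix k w \<Turnstile> subst \<phi>2 a" "\<forall>j<k. suffix j w \<Turnstile> subst \<phi>1 a"
    by auto
  then show ?case using h1 h2 by auto
next
  case (WUntil \<phi>1 \<phi>2)
  have h1: "\<And>k. suffix k w \<Turnstile> subst \<phi>1 a \<Longrightarrow> suffix k w \<Turnstile> subst \<phi>1 b"
    using WUntil.IH(1)[of "suffix k w" for k] WUntil.prems(1) by simp
  have h2: "\<And>k. suffix k w \<Turnstile> subst \<phi>2 a \<Longrightarrow> suffix k w \<Turnstile> subst \<phi>2 b"
    using WUntil.IH(2)[of "suffix k w" for k] WUntil.prems(1) by simp
  show ?case
  proof (cases "\<forall>k. suffix k w \<Turnstile> subst \<phi>1 a")
    case True then show ?thesis using h1 by simp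
  next
    case False
    with WUntil.prems(2) obtain k where "suffix k w \<Turnstile> subst \<phi>2 a" "\<forall>j<k. suffix j w \<Turnstile> subst \<phi>1 a"
      by auto
    then have "suffix k w \<Turnstile> subst \<phi>2 b \<and> (\<forall>j<k. suffix j w \<Turnstile> subst \<phi>1 b)" using h1 h2 by auto
    then show ?thesis by (simp only: subst.simps models.simps) blast
  qed
next
  case (GF \<phi>)
  have h1: "\<And>k. suffix k w \<Turnstile> subst \<phi> a \<Longrightarrow> suffix k w \<Turnstile> subst \<phi> b"
    using GF.IH[of "suffix k w" for k] GF.prems(1) by simp
  have "\<exists>\<^sub>\<infinity>k. suffix k w \<Turnstile> subst \<phi> a" using GF.prems(2) by simp
  then have "\<exists>\<^sub>\<infinity>k. suffix k w \<Turnstile> subst \<phi> b" by (rule INFM_mono) (rule h1)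
  then show ?case by simp
next
  case (FG \<phi>)
  have h1: "\<And>k. suffix k w \<Turnstile> subst \<phi> a \<Longrightarrow> suffix k w \<Turnstile> subst \<phi> b"
    using FG.IH[of "suffix k w" for k] FG.prems(1) by simp
  from FG.prems(2) obtain n where "\<forall>k\<ge>n. suffix k w \<Turnstile> subst \<phi> a" by auto
  then show ?case using h1 by auto
qed simp_all

lemma subst_cong:
  "(\<forall>i. suffix i w \<Turnstile> a \<longleftrightarrow> suffix i w \<Turnstile> b) \<Longrightarrow> w \<Turnstile> subst \<phi> a \<longleftrightarrow> w \<Turnstile> subst \<phi> b"
  using subst_mono[of w a b \<phi>] subst_mono[of w b a \<phi>] by blast

lemma subst_cong_ev:
  assumes "\<forall>i\<ge>n. (suffix i w \<Turnstile> a \<longleftrightarrow> suffix i w \<Turnstile> b)" "k \<ge> n"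
  shows "suffix k w \<Turnstile> subst \<phi> a \<longleftrightarrow> suffix k w \<Turnstile> subst \<phi> b"
proof (rule subst_cong, rule allI)
  fix i show "suffix i (suffix k w) \<Turnstile> a \<longleftrightarrow> suffix i (suffix k w) \<Turnstile> b"
    using assms(1) assms(2) by simp
qed

lemma INFM_ev_cong:
  fixes n :: nat
  assumes "\<forall>k\<ge>n. P k \<longleftrightarrow> Q k"
  shows "(\<exists>\<^sub>\<infinity>k. P k) \<longleftrightarrow> (\<exists>\<^sub>\<infinity>k. Q k)"
proof -
  have "(\<forall>m. \<exists>k>m. P k) \<longleftrightarrow> (\<forall>m. \<exists>k>m. Q k)"
  proof
    assume H: "\<forall>m. \<exists>k>m. P k"
    show "\<forall>m. \<exists>k>m. Q k"
    proof
      fix m obtain k where "k > max m n" "P k" using H by blast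
      then have "k > m" "k \<ge> n" "P k" by auto
      then show "\<exists>k>m. Q k" using assms by blast
    qed
  next
    assume H: "\<forall>m. \<exists>k>m. Q k"
    show "\<forall>m. \<exists>k>m. P k"
    proof
      fix m obtain k where "k > max m n" "Q k" using H by blast
      then have "k > m" "k \<ge> n" "Q k" by auto
      then show "\<exists>k>m. P k" using assms by blast
    qed
  qed
  then show ?thesis unfolding INFM_nat .
qed

theorem lemma3:
  fixes \<phi> :: "('a::finite) option ltl" and \<psi>1 \<psi>2 :: "'a ltl"
  assumes "placeholder_formula \<phi>"
  shows "(GF (subst \<phi> (WUntil \<psi>1 \<psi>2)) \<equiv>\<^sub>L
           Or (GF (subst \<phi> (Until \<psi>1 \<psi>2))) (And (FG \<psi>1) (GF (subst \<phi> LTrue)))) \<and>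
         (FG (subst \<phi> (Until \<psi>1 \<psi>2)) \<equiv>\<^sub>L
           Or (And (GF \<psi>2) (FG (subst \<phi> (WUntil \<psi>1 \<psi>2)))) (FG (subst \<phi> LFalse)))"
proof
  show "GF (subst \<phi> (WUntil \<psi>1 \<psi>2)) \<equiv>\<^sub>L
           Or (GF (subst \<phi> (Until \<psi>1 \<psi>2))) (And (FG \<psi>1) (GF (subst \<phi> LTrue)))"
    unfolding ltl_equiv_def
  proof (intro allI iffI)
    fix w :: "'a word"
    have UW: "\<forall>i. suffix i w \<Turnstile> Until \<psi>1 \<psi>2 \<longrightarrow> suffix i w \<Turnstile> WUntil \<psi>1 \<psi>2" by auto
    assume H: "w \<Turnstile> GF (subst \<phi> (WUntil \<psi>1 \<psi>2))"
    show "w \<Turnstile> Or (GF (subst \<phi> (Until \<psi>1 \<psi>2))) (And (FG \<psi>1) (GF (subst \<phi> LTrue)))"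
    proof (cases "w \<Turnstile> FG \<psi>1")
      case True
      have "\<And>k. suffix k w \<Turnstile> subst \<phi> (WUntil \<psi>1 \<psi>2) \<Longrightarrow> suffix k w \<Turnstile> subst \<phi> LTrue"
        by (rule subst_mono[rotated]) auto
      then have "\<exists>\<^sub>\<infinity>k. suffix k w \<Turnstile> subst \<phi> LTrue"
        using H by (simp add: INFM_mono)
      with True show ?thesis by simp
    next
      case False
      then have nf: "\<forall>n. \<exists>k\<ge>n. \<not> suffix k w \<Turnstile> \<psi>1" by auto
      have eq: "\<forall>i. suffix i w \<Turnstile> WUntil \<psi>1 \<psi>2 \<longleftrightarrow> suffix i w \<Turnstile> Until \<psi>1 \<psi>2"
      proof
        fix i
        obtain k where "k \<ge> i" "\<not> suffix k w \<Turnstile> \<psi>1" using nf by blast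
        then have "\<not> (\<forall>j. suffix j (suffix i w) \<Turnstile> \<psi>1)"
          by (metis le_add_diff_inverse suffix_suffix)
        then show "suffix i w \<Turnstile> WUntil \<psi>1 \<psi>2 \<longleftrightarrow> suffix i w \<Turnstile> Until \<psi>1 \<psi>2"
          by (simp del: suffix_suffix) blast
      qed
      have "\<And>k. suffix k w \<Turnstile> subst \<phi> (WUntil \<psi>1 \<psi>2) \<longleftrightarrow> suffix k w \<Turnstile> subst \<phi> (Until \<psi>1 \<psi>2)"
        by (rule subst_cong_ev[where n=0]) (use eq in auto)
      with H show ?thesis by simp
    qed
  next
    fix w :: "'a word"
    assume H: "w \<Turnstile> Or (GF (subst \<phi> (Until \<psi>1 \<psi>2))) (And (FG \<psi>1) (GF (subst \<phi> LTrue)))"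
    show "w \<Turnstile> GF (subst \<phi> (WUntil \<psi>1 \<psi>2))"
    proof (cases "w \<Turnstile> GF (subst \<phi> (Until \<psi>1 \<psi>2))")
      case True
      have "\<And>k. suffix k w \<Turnstile> subst \<phi> (Until \<psi>1 \<psi>2) \<Longrightarrow> suffix k w \<Turnstile> subst \<phi> (WUntil \<psi>1 \<psi>2)"
        by (rule subst_mono[rotated]) auto
      with True show ?thesis by (auto elim: INFM_mono)
    next
      case False
      with H have "w \<Turnstile> And (FG \<psi>1) (GF (subst \<phi> LTrue))"
        by (simp only: models.simps(6)) blast
      then obtain n where n: "\<forall>k\<ge>n. suffix k w \<Turnstile> \<psi>1" and T: "w \<Turnstile> GF (subst \<phi> LTrue)"
        by (simp only: models.simps) blast
      have eq: "\<forall>i\<ge>n. suffix i w \<Turnstile> WUntil \<psi>1 \<psi>2 \<longleftrightarrow> suffix i w \<Turnstile> LTrue"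
        using n by auto
      have "\<forall>k\<ge>n. suffix k w \<Turnstile> subst \<phi> (WUntil \<psi>1 \<psi>2) \<longleftrightarrow> suffix k w \<Turnstile> subst \<phi> LTrue"
        using subst_cong_ev[OF eq] by blast
      then have "(\<exists>\<^sub>\<infinity>k. suffix k w \<Turnstile> subst \<phi> (WUntil \<psi>1 \<psi>2)) \<longleftrightarrow> (\<exists>\<^sub>\<infinity>k. suffix k w \<Turnstile> subst \<phi> LTrue)"
        by (rule INFM_ev_cong)
      with T show ?thesis by simp
    qed
  qed
next
  show "FG (subst \<phi> (Until \<psi>1 \<psi>2)) \<equiv>\<^sub>L
           Or (And (GF \<psi>2) (FG (subst \<phi> (WUntil \<psi>1 \<psi>2)))) (FG (subst \<phi> LFalse))"
    unfolding ltl_equiv_def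
  proof (intro allI)
    fix w :: "'a word"
    show "w \<Turnstile> FG (subst \<phi> (Until \<psi>1 \<psi>2)) \<longleftrightarrow>
          w \<Turnstile> Or (And (GF \<psi>2) (FG (subst \<phi> (WUntil \<psi>1 \<psi>2)))) (FG (subst \<phi> LFalse))"
    proof (cases "w \<Turnstile> GF \<psi>2")
      case True
      then have inf: "\<forall>m. \<exists>k>m. suffix k w \<Turnstile> \<psi>2" by (simp add: INFM_nat)
      have eq: "\<forall>i. suffix i w \<Turnstile> WUntil \<psi>1 \<psi>2 \<longleftrightarrow> suffix i w \<Turnstile> Until \<psi>1 \<psi>2"
      proof
        fix i
        obtain k where "k > i" "suffix k w \<Turnstile> \<psi>2" using inf by blast
        then have "\<exists>k. suffix k (suffix i w) \<Turnstile> \<psi>2"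
          by (metis less_imp_le_nat le_add_diff_inverse suffix_suffix)
        then show "suffix i w \<Turnstile> WUntil \<psi>1 \<psi>2 \<longleftrightarrow> suffix i w \<Turnstile> Until \<psi>1 \<psi>2"
          by (simp del: suffix_suffix) blast
      qed
      have e2: "\<And>k. suffix k w \<Turnstile> subst \<phi> (WUntil \<psi>1 \<psi>2) \<longleftrightarrow> suffix k w \<Turnstile> subst \<phi> (Until \<psi>1 \<psi>2)"
        by (rule subst_cong_ev[where n=0]) (use eq in auto)
      have m: "\<And>k. suffix k w \<Turnstile> subst \<phi> LFalse \<Longrightarrow> suffix k w \<Turnstile> subst \<phi> (Until \<psi>1 \<psi>2)"
        by (rule subst_mono[rotated]) auto
      show ?thesis using True e2 m by auto
    next
      case False
      then obtain n where n: "\<forall>k\<ge>n. \<not> suffix k w \<Turnstile> \<psi>2"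
        by (auto simp: INFM_nat) (metis Suc_le_eq)
      have eq: "\<forall>i\<ge>n. suffix i w \<Turnstile> Until \<psi>1 \<psi>2 \<longleftrightarrow> suffix i w \<Turnstile> LFalse"
        using n by auto
      have e2: "\<forall>k\<ge>n. suffix k w \<Turnstile> subst \<phi> (Until \<psi>1 \<psi>2) \<longleftrightarrow> suffix k w \<Turnstile> subst \<phi> LFalse"
        using subst_cong_ev[OF eq] by blast
      have m: "\<And>k. suffix k w \<Turnstile> subst \<phi> LFalse \<Longrightarrow> suffix k w \<Turnstile> subst \<phi> (Until \<psi>1 \<psi>2)"
        by (rule subst_mono[rotated]) auto
      show ?thesis
      proof
        assume "w \<Turnstile> FG (subst \<phi> (Until \<psi>1 \<psi>2))"
        then obtain m where "\<forall>k\<ge>m. suffix k w \<Turnstile> subst \<phi> (Until \<psi>1 \<psi>2)" by auto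
        with e2 have "\<forall>k\<ge>max m n. suffix k w \<Turnstile> subst \<phi> LFalse" by auto
        then have "w \<Turnstile> FG (subst \<phi> LFalse)" by (simp only: models.simps) blast
        then show "w \<Turnstile> Or (And (GF \<psi>2) (FG (subst \<phi> (WUntil \<psi>1 \<psi>2)))) (FG (subst \<phi> LFalse))"
          by (simp only: models.simps(6) simp_thms)
      next
        assume "w \<Turnstile> Or (And (GF \<psi>2) (FG (subst \<phi> (WUntil \<psi>1 \<psi>2)))) (FG (subst \<phi> LFalse))"
        with False have "w \<Turnstile> FG (subst \<phi> LFalse)" by (simp only: models.simps(5,6)) blast
        with m show "w \<Turnstile> FG (subst \<phi> (Until \<psi>1 \<psi>2))" by auto
      qed
    qed
  qed
qed

end
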